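(* For every integer $k\geq 1$ and every integer $n\geq 0$, in $\mathbb{Q}(t)$, $$\sum_{i=k2^{n}}^{k2^{n+1}}\frac{1}{B_i(t)B_{i+1}(t)}=\frac{(2-t)\,S_k(t)}{t^{\,n+\lfloor\log_2 k\rfloor+1}B_k(t)}+\frac{1}{t^{\,n+1}B_k(t)}\left(\frac{1}{B_{k2^{n+1}+1}(t)}+1\right),$$ where the sum runs over all integers $i$ with $k2^n\leq i\leq k2^{n+1}$.
   Context: The Stern polynomials $B_n(t)\in\mathbb{Z}[t]$ are defined by $B_0(t)=0$, $B_1(t)=1$, and for $n\geq 1$: $B_{2n}(t)=tB_n(t)$, $B_{2n+1}(t)=B_n(t)+B_{n+1}(t)$. The polynomials $S_n(t)$, $n\ge1$, are defined by $S_1(t)=S_2(t)=0$ and, for $k\geq 1$, $S_{2k}(t)=tS_k(t)$, $S_{2k+1}(t)=S_k(t)+S_{k+1}(t)+t^{\lfloor\log_2 k\rfloor}$. *)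

theory Defs
  imports Complex_Main "HOL-Computational_Algebra.Polynomial" "HOL-Computational_Algebra.Polynomial_Factorial"
begin

text \<open>Stern polynomials B_n(t) in Z[t], realised in Q[t] (Z[t] embeds in Q[t]).\<close>
function stern_B :: "nat \<Rightarrow> rat poly" where
  "stern_B n =
     (if n = 0 then 0
      else if n = 1 then 1
      else if even n then [:0, 1:] * stern_B (n div 2)
      else stern_B (n div 2) + stern_B (n div 2 + 1))"
  by pat_completeness auto
termination by (relation "measure id") (auto elim!: oddE)

text \<open>The polynomials S_n(t), n >= 1; the value at 0 is irrelevant (set to 0).\<close>
function stern_S :: "nat \<Rightarrow> rat poly" where
  "stern_S n =
     (if n \<le> 2 then 0
      else if even n then [:0, 1:] * stern_S (n div 2)
      else stern_S (n div 2) + stern_S (n div 2 + 1)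
             + [:0, 1:] ^ nat \<lfloor>log 2 (real (n div 2))\<rfloor>)"
  by pat_completeness auto
termination by (relation "measure id") (auto elim!: oddE)

text \<open>Q[t] is embedded into its fraction field Q(t) via to_fract.\<close>

end

theory Submission
  imports Defs "HOL-Library.Discrete_Functions"
begin

declare stern_B.simps[simp del] stern_S.simps[simp del]

lemma B01[simp]: "stern_B 0 = 0" "stern_B 1 = 1" "stern_B (Suc 0) = 1"
  by (simp_all add: stern_B.simps)

lemma B_even: "stern_B (2*n) = [:0,1:] * stern_B n"
  by (subst stern_B.simps) auto

lemma B_odd: "stern_B (2*n+1) = stern_B n + stern_B (n+1)"
  by (subst stern_B.simps) auto

lemma B_odd': "stern_B (Suc (2*n)) = stern_B n + stern_B (Suc n)"
  using B_odd[of n] by simp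

lemma S_even: "m \<ge> 1 \<Longrightarrow> stern_S (2*m) = [:0,1:] * stern_S m"
proof -
  assume "m \<ge> 1"
  show ?thesis
  proof (cases "m = 1")
    case True
    then show ?thesis by (simp add: stern_S.simps)
  next
    case False
    with \<open>m \<ge> 1\<close> show ?thesis by (subst stern_S.simps) auto
  qed
qed

lemma S_odd: "m \<ge> 1 \<Longrightarrow> stern_S (2*m+1) = stern_S m + stern_S (m+1) + [:0,1:] ^ floor_log m"
  by (subst stern_S.simps) (auto simp: floor_log_altdef)

lemma S_pow2: "stern_S (2^j) = 0"
proof (induction j)
  case 0 then show ?case by (simp add: stern_S.simps)
next
  case (Suc j)
  have "stern_S (2^Suc j) = stern_S (2 * 2^j)" by simp
  also have "\<dots> = [:0,1:] * stern_S (2^j)" by (rule S_even) simp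
  finally show ?case using Suc by simp
qed

lemma B_pos: "n \<ge> 1 \<Longrightarrow> poly (stern_B n) 1 \<ge> 1"
proof (induction n rule: less_induct)
  case (less n)
  show ?case
  proof (cases "n = 1")
    case True then show ?thesis by (simp add: stern_B.simps)
  next
    case False
    show ?thesis
    proof (cases "even n")
      case True
      then obtain m where m: "n = 2*m" by auto
      with less.prems False have "m \<ge> 1" "m < n" by auto
      then show ?thesis using less.IH[of m] m by (simp add: B_even)
    next
      case odd: False
      then obtain m where m: "n = 2*m+1" by (auto elim: oddE)
      with less.prems False have "m \<ge> 1" "m < n" by auto
      then have "poly (stern_B m) 1 \<ge> 1" using less.IH by auto
      moreover have "poly (stern_B (m+1)) 1 \<ge> 1"
        using less.IH[of "m+1"] m \<open>m \<ge> 1\<close> by auto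
      ultimately show ?thesis using m by (simp add: B_odd')
    qed
  qed
qed

lemma B_nz: "n \<ge> 1 \<Longrightarrow> to_fract (stern_B n) \<noteq> 0"
  using B_pos[of n] by auto

lemma to_fract_power: "to_fract (p ^ n) = to_fract p ^ n"
  by (induction n) (simp_all only: power_0 power_Suc to_fract_mult to_fract_1)

abbreviation "xx \<equiv> to_fract ([:0,1:] :: rat poly)"
abbreviation "bb i \<equiv> to_fract (stern_B i)"
abbreviation "ss i \<equiv> to_fract (stern_S i)"

lemma xx_nz: "xx \<noteq> 0" by simp

definition F :: "nat \<Rightarrow> nat \<Rightarrow> rat poly fract" where
  "F a b = (\<Sum>i\<in>{a..<b}. 1 / (bb i * bb (i+1)))"

lemma bb_even: "bb (2*n) = xx * bb n"
  by (simp only: B_even to_fract_mult)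
lemma bb_odd: "bb (2*n+1) = bb n + bb (n+1)"
  by (simp only: B_odd to_fract_add)

lemma pair: assumes "j \<ge> 1"
  shows "1/(bb (2*j) * bb (2*j+1)) + 1/(bb (2*j+1) * bb (2*j+2)) = 1/(xx * bb j * bb (j+1))"
proof -
  have e: "bb (2*j+2) = xx * bb (j+1)" using bb_even[of "j+1"] by simp
  have n1: "bb j \<noteq> 0" "bb (j+1) \<noteq> 0" "bb (2*j+1) \<noteq> 0" using assms B_nz[of j] B_nz[of "j+1"] B_nz[of "2*j+1"] by auto
  have s: "bb j + bb (j+1) \<noteq> 0" using n1(3) bb_odd[of j] by metis
  have alg: "\<And>x a c :: rat poly fract. x \<noteq> 0 \<Longrightarrow> a \<noteq> 0 \<Longrightarrow> c \<noteq> 0 \<Longrightarrow> a + c \<noteq> 0 \<Longrightarrow>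
     1/(x*a*(a+c)) + 1/((a+c)*(x*c)) = 1/(x*a*c)"
    by (simp add: divide_simps)
  show ?thesis unfolding e bb_even bb_odd using alg[OF xx_nz n1(1,2) s] by simp
qed

lemma F_double: assumes "a \<ge> 1" "a \<le> b" shows "F (2*a) (2*b) = F a b / xx"
  using assms(2)
proof (induction b rule: dec_induct)
  case base then show ?case by (simp add: F_def)
next
  case (step b)
  have "F (2*a) (2*Suc b) = F (2*a) (2*b) + (1/(bb (2*b) * bb (2*b+1)) + 1/(bb (2*b+1) * bb (2*b+2)))"
    unfolding F_def using step.hyps
    by (simp add: sum.atLeastLessThan_Suc add.assoc)
  also have "\<dots> = F a b / xx + 1/(xx * bb b * bb (b+1))"
    using step.IH pair[of b] step.hyps assms by simp
  also have "\<dots> = F a (Suc b) / xx"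
    unfolding F_def using step.hyps by (simp add: sum.atLeastLessThan_Suc add_divide_distrib)
  finally show ?case .
qed

lemma F_pow: assumes "a \<ge> 1" "a \<le> b" shows "F (2^n*a) (2^n*b) = F a b / xx^n"
proof (induction n)
  case 0 then show ?case by simp
next
  case (Suc n)
  have "F (2^Suc n*a) (2^Suc n*b) = F (2*(2^n*a)) (2*(2^n*b))" by (simp add: mult.assoc)
  also have "\<dots> = F (2^n*a) (2^n*b) / xx"
    by (rule F_double) (use assms in auto)
  finally show ?case using Suc by simp
qed

lemma log_step: assumes "m \<ge> 1" "floor_log (m+1) \<noteq> floor_log m" shows "m+1 = 2 ^ floor_log (m+1)"
proof -
  have "floor_log m \<le> floor_log (m+1)" by (rule floor_log_le_iff) simp
  with assms have lt: "floor_log m < floor_log (m+1)" by simp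
  have "m < 2 * 2 ^ floor_log m" by (rule floor_log_exp2_gt)
  also have "\<dots> \<le> 2 ^ floor_log (m+1)"
    using lt by (metis power_Suc Suc_leI power_increasing_iff one_less_numeral_iff semiring_norm(76))
  finally have "m < 2 ^ floor_log (m+1)" .
  moreover have "2 ^ floor_log (m+1) \<le> m+1" by (rule floor_log_exp2_le) simp
  ultimately show ?thesis by simp
qed

lemma G: "k \<ge> 1 \<Longrightarrow> xx * bb k * F k (2*k) = (2 - xx) * ss k / xx ^ floor_log k + 1"
proof (induction k rule: less_induct)
  case (less k)
  show ?case
  proof (cases "k = 1")
    case True
    then show ?thesis by (simp add: F_def stern_S.simps stern_B.simps numeral_2_eq_2)
  next
    case False
    show ?thesis
    proof (cases "even k")
      case True
      then obtain m where m: "k = 2*m" by auto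
      with less.prems False have m1: "m \<ge> 1" "m < k" by auto
      have "F k (2*k) = F m (2*m) / xx" using m F_double[of m "2*m"] m1 by simp
      then have "xx * bb k * F k (2*k) = xx * bb m * F m (2*m)"
        using m by (simp add: bb_even)
      also have "\<dots> = (2 - xx) * ss m / xx ^ floor_log m + 1" using less.IH m1 by simp
      also have "\<dots> = (2 - xx) * ss k / xx ^ floor_log k + 1"
      proof -
        have "ss k = xx * ss m" by (simp only: m S_even[OF m1(1)] to_fract_mult)
        moreover have "floor_log k = Suc (floor_log m)" using m m1 by simp
        ultimately show ?thesis using xx_nz by simp
      qed
      finally show ?thesis .
    next
      case odd: False
      then obtain m where m: "k = 2*m+1" by (auto elim: oddE)
      with less.prems False have m1: "m \<ge> 1" "m < k" "m+1 < k" by auto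
      have IH1: "xx * bb m * F m (2*m) = (2 - xx) * ss m / xx ^ floor_log m + 1"
        using less.IH m1 by simp
      have IH2: "xx * bb (m+1) * F (m+1) (2*(m+1)) = (2 - xx) * ss (m+1) / xx ^ floor_log (m+1) + 1"
        using less.IH[of "m+1"] m1 by simp
      have S2: "ss (m+1) / xx ^ floor_log (m+1) = ss (m+1) / xx ^ floor_log m"
      proof (cases "floor_log (m+1) = floor_log m")
        case False
        then have "m+1 = 2 ^ floor_log (m+1)" using log_step m1 by simp
        then have "stern_S (m+1) = 0" using S_pow2 by metis
        then show ?thesis by simp
      qed simp
      have nz: "bb m \<noteq> 0" "bb (m+1) \<noteq> 0" "bb (2*m+1) \<noteq> 0" "bb (2*m) \<noteq> 0"
        using m1 B_nz by auto
      have Fm: "F m (2*m+1) = F m (2*m) + 1/(bb (2*m) * bb (2*m+1))"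
        unfolding F_def by (simp add: sum.atLeastLessThan_Suc)
      have Fm2: "F (2*m) (2*m+2) = F m (m+1) / xx" using F_double[of m "m+1"] m1 by simp
      have Fa: "F (2*m) (4*m+2) = F m (2*m+1) / xx" using F_double[of m "2*m+1"] m1 by simp
      have split1: "F (2*m) (4*m+2) = 1/(bb (2*m) * bb (2*m+1)) + F (2*m+1) (4*m+2)"
        unfolding F_def by (subst sum.atLeast_Suc_lessThan) auto
      have E1: "F k (2*k) = F m (2*m) / xx + (1 - xx) / (xx*xx * bb m * bb (2*m+1))"
      proof -
        have "F k (2*k) = F (2*m+1) (4*m+2)" using m by (simp add: algebra_simps)
        also have "\<dots> = (F m (2*m) + 1/(bb (2*m) * bb (2*m+1))) / xx - 1/(bb (2*m) * bb (2*m+1))"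
          using split1 Fa Fm by simp
        also have "\<dots> = F m (2*m) / xx + (1 - xx) / (xx*xx * bb m * bb (2*m+1))"
          unfolding bb_even using nz(1,3) xx_nz by (simp add: field_simps)
        finally show ?thesis .
      qed
      have Fm1: "F (m+1) (2*(m+1)) = F (m+1) (2*m+1) + 1/(bb (2*m+1) * bb (2*m+2))"
        unfolding F_def by (simp add: sum.atLeastLessThan_Suc)
      have split2: "F (2*m+2) (4*m+2) = F (m+1) (2*m+1) / xx"
        using F_double[of "m+1" "2*m+1"] m1 by (simp add: algebra_simps)
      have split3: "F (2*m+1) (4*m+2) = 1/(bb (2*m+1) * bb (2*m+2)) + F (2*m+2) (4*m+2)"
        unfolding F_def by (subst sum.atLeast_Suc_lessThan) auto
      have bb2: "bb (2*m+2) = xx * bb (m+1)" using bb_even[of "m+1"] by simp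
      have E2: "F k (2*k) = F (m+1) (2*(m+1)) / xx - (1 - xx) / (xx*xx * bb (m+1) * bb (2*m+1))"
      proof -
        have "F k (2*k) = F (2*m+1) (4*m+2)" using m by (simp add: algebra_simps)
        also have "\<dots> = 1/(bb (2*m+1) * bb (2*m+2)) + (F (m+1) (2*(m+1)) - 1/(bb (2*m+1) * bb (2*m+2))) / xx"
          using split3 split2 Fm1 by simp
        also have "\<dots> = F (m+1) (2*(m+1)) / xx - (1 - xx) / (xx*xx * bb (m+1) * bb (2*m+1))"
          using nz xx_nz unfolding bb2 by (simp add: field_simps)
        finally show ?thesis .
      qed
      have bk: "bb k = bb m + bb (m+1)" using bb_odd[of m] m by metis
      have "bb k * F k (2*k) = bb m * F k (2*k) + bb (m+1) * F k (2*k)"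
        unfolding bk by (rule distrib_right)
      also have "\<dots> = (bb m * F m (2*m) + bb (m+1) * F (m+1) (2*(m+1))) / xx"
        apply (subst (1) E1, subst E2)
        using nz xx_nz by (simp add: field_simps)
      finally have "xx * bb k * F k (2*k) = (xx * bb m * F m (2*m) + xx * bb (m+1) * F (m+1) (2*(m+1))) / xx"
        using xx_nz by (simp add: field_simps)
      also have "\<dots> = ((2 - xx) * ss m / xx ^ floor_log m + (2 - xx) * ss (m+1) / xx ^ floor_log m + 2) / xx"
        unfolding IH1 IH2 using S2 by (simp add: times_divide_eq_right[symmetric] del: times_divide_eq_right)
      also have "\<dots> = (2 - xx) * ss k / xx ^ floor_log k + 1"
      proof -
        have fl: "floor_log k = Suc (floor_log m)" using m m1
          by (simp add: floor_log_rec)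
        have sk: "ss k = ss m + ss (m+1) + xx ^ floor_log m"
          using m S_odd[OF m1(1)] by (simp add: to_fract_add to_fract_power)
        show ?thesis unfolding fl sk using xx_nz by (simp add: field_simps)
      qed
      finally show ?thesis .
    qed
  qed
qed

theorem mainTheorem15:
  fixes k n :: nat
  assumes "k \<ge> 1"
  shows "(\<Sum>i\<in>{k * 2 ^ n .. k * 2 ^ (n + 1)}.
            1 / (to_fract (stern_B i) * to_fract (stern_B (i + 1))))
       = ((2 - to_fract [:0, 1:]) * to_fract (stern_S k))
           / (to_fract [:0, 1:] ^ (n + nat \<lfloor>log 2 (real k)\<rfloor> + 1) * to_fract (stern_B k))
         + 1 / (to_fract [:0, 1:] ^ (n + 1) * to_fract (stern_B k))
           * (1 / to_fract (stern_B (k * 2 ^ (n + 1) + 1)) + 1)"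
proof -
  define N where "N = k * 2 ^ (n + 1)"
  define L where "L = nat \<lfloor>log 2 (real k)\<rfloor>"
  have L: "L = floor_log k" using assms by (simp add: L_def floor_log_altdef)
  have bpow: "bb (2^j * k) = xx^j * bb k" for j
  proof (induction j)
    case (Suc j)
    have "bb (2^Suc j * k) = bb (2*(2^j*k))" by (simp add: mult.assoc)
    also have "\<dots> = xx * bb (2^j*k)" by (rule bb_even)
    finally show ?case using Suc by simp
  qed simp
  have bN: "bb N = xx^(n+1) * bb k" using bpow[of "n+1"] by (simp add: N_def mult.commute)
  have nz: "bb k \<noteq> 0" "bb (N+1) \<noteq> 0" using B_nz assms by auto
  have "{k * 2 ^ n .. N} = insert N {k * 2^n ..< N}" unfolding N_def by auto
  then have "(\<Sum>i\<in>{k * 2 ^ n .. N}. 1 / (bb i * bb (i + 1)))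
      = 1 / (bb N * bb (N+1)) + (\<Sum>i\<in>{k * 2 ^ n ..< N}. 1 / (bb i * bb (i + 1)))"
    by simp
  also have "(\<Sum>i\<in>{k * 2 ^ n ..< N}. 1 / (bb i * bb (i + 1))) = F (2^n*k) (2^n*(2*k))"
    unfolding F_def N_def by (simp add: mult_ac)
  also have "F (2^n*k) (2^n*(2*k)) = F k (2*k) / xx^n" using F_pow assms by simp
  also have "F k (2*k) = ((2 - xx) * ss k / xx ^ L + 1) / (xx * bb k)"
    using G[OF assms] nz xx_nz unfolding L by (simp add: field_simps)
  finally have "(\<Sum>i\<in>{k * 2 ^ n .. N}. 1 / (bb i * bb (i + 1))) =
     1 / (bb N * bb (N+1)) + ((2 - xx) * ss k / xx ^ L + 1) / (xx * bb k) / xx^n" .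
  also have "\<dots> = ((2 - xx) * ss k) / (xx ^ (n + L + 1) * bb k)
         + 1 / (xx ^ (n + 1) * bb k) * (1 / bb (N+1) + 1)"
    unfolding bN using nz xx_nz by (simp add: field_simps power_add)
  finally show ?thesis unfolding N_def L_def .
qed

end
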